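(* Let $M$ be a finite ordinal monoid and $h\colon\Sigma\to M$. Then $(\mathcal P(M),\{1\},\subseteq,\cdot,-^\omega,-^\sharp)$ and $(\mathrm{Sat}(h),\{1\},\subseteq,\cdot,-^\omega,-^\sharp)$ (with the operations of the power ordinal monoid) are ordinal monoids with merge.
   Context: An ordinal monoid is a set $M$ with $\pi\colon M^{\mathrm{ord}}\to M$ (words of countable ordinal length), $\pi(x)=x$ on one-letter words, and generalised associativity $\pi((\pi(u_\iota))_{\iota<\alpha})=\pi(u_0u_1\cdots)$. Write $1=\pi(\varepsilon)$, $x\cdot y=\pi(xy)$, $x^\omega=\pi(xxx\cdots)$; a finite ordinal monoid is determined by $(M,1,\cdot,-^\omega)$. It is ordered by a partial order $\le$ if $u\le v$ letterwise implies $\pi(u)\le\pi(v)$. Power ordinal monoid: $\mathcal P(M)$ with $\Pi((X_\iota)_\iota)=\{\pi((x_\iota)_\iota):x_\iota\in X_\iota\}$; unit $\{1\}$, $X\cdot Y=\{xy\}$, $X^\omega=\{u\cdot v^\omega:u,v\in X^+\}$ ($X^+$ = finite nonempty products of elements of $X$). In a finite semigroup $x^{!}$ is the idempotent power of $x$ and $x^{!+k}$ the eventual value of $x^{n!+k}$; $X^\sharp=\bigcup_{k\in\mathbb N}X^{!+k}$ (powers in $(\mathcal P(M),\cdot)$). $\mathrm{Sat}(h)$ is the least subset of $\mathcal P(M)$ containing all $\{h(a)\}$ ($a\in\Sigma$) and $\{1\}$ closed under binary product, $\sharp$ and $\omega$. Ordinal monoid with merge: a tuple $(M,1,\le,\cdot,-^\omega,-^\sharp)$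 with $M$ finite, $(M,1,\le,\cdot,-^\omega)$ the presentation of an ordered finite ordinal monoid, and $-^\sharp\colon M\to M$ monotone such that for all $a,b\in M$ and all integers $k$: $a^{!+k}\le a^\sharp$, $(a^{!})^\sharp=a^{!}$, $a^\sharp\cdot a^\sharp=(a^\sharp)^\sharp=a^\sharp$, and $(a\cdot b)^\sharp=a\cdot(b\cdot a)^\sharp\cdot b$. *)

theory Defs
  imports Main
begin

text \<open>A word of countable ordinal length over C is represented by a well-order r
whose field is a subset of nat (so every countable ordinal occurs, up to isomorphism)
together with a letter assignment f; only the values of f on Field r matter.\<close>

definition om_word :: "'a set \<Rightarrow> nat rel \<Rightarrow> (nat \<Rightarrow> 'a) \<Rightarrow> bool" where
  "om_word C r f \<longleftrightarrow> Well_order r \<and> f ` Field r \<subseteq> C"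

text \<open>Generalised associativity: a monotone map g from the positions of the word (r,f)
to the positions of a well-order s cuts (r,f) into consecutive (possibly empty) factors
u_j (the fibres of g), j ranging over s; then pi of the word of the pi(u_j) is pi(r,f).\<close>

definition ordinal_monoid :: "'a set \<Rightarrow> (nat rel \<Rightarrow> (nat \<Rightarrow> 'a) \<Rightarrow> 'a) \<Rightarrow> bool" where
  "ordinal_monoid C pi \<longleftrightarrow>
     (\<forall>r f. om_word C r f \<longrightarrow> pi r f \<in> C) \<and>
     (\<forall>r f f'. om_word C r f \<longrightarrow> (\<forall>i\<in>Field r. f i = f' i) \<longrightarrow> pi r f = pi r f') \<and>
     (\<forall>i f. f i \<in> C \<longrightarrow> pi {(i,i)} f = f i) \<and>
     (\<forall>r s f g. om_word C r f \<longrightarrow> Well_order s \<longrightarrow> g ` Field r \<subseteq> Field s \<longrightarrow>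
        (\<forall>i j. (i,j) \<in> r \<longrightarrow> (g i, g j) \<in> s) \<longrightarrow>
        pi s (\<lambda>j. pi (Restr r {i \<in> Field r. g i = j}) f) = pi r f)"

definition ordered_om :: "'a set \<Rightarrow> ('a \<Rightarrow> 'a \<Rightarrow> bool) \<Rightarrow> (nat rel \<Rightarrow> (nat \<Rightarrow> 'a) \<Rightarrow> 'a) \<Rightarrow> bool" where
  "ordered_om C le pi \<longleftrightarrow>
     (\<forall>x\<in>C. le x x) \<and>
     (\<forall>x\<in>C. \<forall>y\<in>C. le x y \<longrightarrow> le y x \<longrightarrow> x = y) \<and>
     (\<forall>x\<in>C. \<forall>y\<in>C. \<forall>z\<in>C. le x y \<longrightarrow> le y z \<longrightarrow> le x z) \<and>
     (\<forall>r f f'. om_word C r f \<longrightarrow> om_word C r f' \<longrightarrow> (\<forall>i\<in>Field r. le (f i) (f' i)) \<longrightarrow>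
        le (pi r f) (pi r f'))"

definition w2 :: "nat rel" where "w2 = {(0,0),(0,1),(1,1)}"
definition womega :: "nat rel" where "womega = {(i,j). i \<le> j}"

definition om_one :: "(nat rel \<Rightarrow> (nat \<Rightarrow> 'a) \<Rightarrow> 'a) \<Rightarrow> 'a" where
  "om_one pi = pi {} (\<lambda>_. undefined)"
definition om_mult :: "(nat rel \<Rightarrow> (nat \<Rightarrow> 'a) \<Rightarrow> 'a) \<Rightarrow> 'a \<Rightarrow> 'a \<Rightarrow> 'a" where
  "om_mult pi x y = pi w2 (\<lambda>i. if i = 0 then x else y)"
definition om_omega :: "(nat rel \<Rightarrow> (nat \<Rightarrow> 'a) \<Rightarrow> 'a) \<Rightarrow> 'a \<Rightarrow> 'a" where
  "om_omega pi x = pi womega (\<lambda>_. x)"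

definition ordered_fin_om_presentation ::
  "'a set \<Rightarrow> 'a \<Rightarrow> ('a \<Rightarrow> 'a \<Rightarrow> bool) \<Rightarrow> ('a \<Rightarrow> 'a \<Rightarrow> 'a) \<Rightarrow> ('a \<Rightarrow> 'a) \<Rightarrow> bool" where
  "ordered_fin_om_presentation C e le m om \<longleftrightarrow> finite C \<and>
     (\<exists>pi. ordinal_monoid C pi \<and> ordered_om C le pi \<and>
        (\<forall>f. pi {} f = e) \<and>
        (\<forall>x\<in>C. \<forall>y\<in>C. m x y = om_mult pi x y) \<and>
        (\<forall>x\<in>C. om x = om_omega pi x))"

primrec spow :: "('a \<Rightarrow> 'a \<Rightarrow> 'a) \<Rightarrow> 'a \<Rightarrow> 'a \<Rightarrow> nat \<Rightarrow> 'a" where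
  "spow m e a 0 = e"
| "spow m e a (Suc n) = m (spow m e a n) a"

definition bangp :: "('a \<Rightarrow> 'a \<Rightarrow> 'a) \<Rightarrow> 'a \<Rightarrow> 'a \<Rightarrow> int \<Rightarrow> 'a" where
  "bangp m e a k = (THE y. \<exists>N. \<forall>n\<ge>N. spow m e a (nat (int (fact n) + k)) = y)"

definition ordinal_monoid_merge ::
  "'a set \<Rightarrow> 'a \<Rightarrow> ('a \<Rightarrow> 'a \<Rightarrow> bool) \<Rightarrow> ('a \<Rightarrow> 'a \<Rightarrow> 'a) \<Rightarrow> ('a \<Rightarrow> 'a) \<Rightarrow> ('a \<Rightarrow> 'a) \<Rightarrow> bool" where
  "ordinal_monoid_merge C e le m om sh \<longleftrightarrow>
     ordered_fin_om_presentation C e le m om \<and>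
     (\<forall>a\<in>C. sh a \<in> C) \<and>
     (\<forall>a\<in>C. \<forall>b\<in>C. le a b \<longrightarrow> le (sh a) (sh b)) \<and>
     (\<forall>a\<in>C. (\<forall>k::int. le (bangp m e a k) (sh a)) \<and>
             sh (bangp m e a 0) = bangp m e a 0 \<and>
             m (sh a) (sh a) = sh a \<and> sh (sh a) = sh a) \<and>
     (\<forall>a\<in>C. \<forall>b\<in>C. sh (m a b) = m a (m (sh (m b a)) b))"

definition pmul :: "(nat rel \<Rightarrow> (nat \<Rightarrow> 'a) \<Rightarrow> 'a) \<Rightarrow> 'a set \<Rightarrow> 'a set \<Rightarrow> 'a set" where
  "pmul pi X Y = {om_mult pi x y | x y. x \<in> X \<and> y \<in> Y}"

definition pplus :: "(nat rel \<Rightarrow> (nat \<Rightarrow> 'a) \<Rightarrow> 'a) \<Rightarrow> 'a set \<Rightarrow> 'a set" where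
  "pplus pi X = (\<Union>n\<in>{n. n \<ge> 1}. spow (pmul pi) {om_one pi} X n)"

definition pomega :: "(nat rel \<Rightarrow> (nat \<Rightarrow> 'a) \<Rightarrow> 'a) \<Rightarrow> 'a set \<Rightarrow> 'a set" where
  "pomega pi X = {om_mult pi u (om_omega pi v) | u v. u \<in> pplus pi X \<and> v \<in> pplus pi X}"

definition psharp :: "(nat rel \<Rightarrow> (nat \<Rightarrow> 'a) \<Rightarrow> 'a) \<Rightarrow> 'a set \<Rightarrow> 'a set" where
  "psharp pi X = (\<Union>k::nat. bangp (pmul pi) {om_one pi} X (int k))"

inductive_set Sat :: "(nat rel \<Rightarrow> (nat \<Rightarrow> 'a) \<Rightarrow> 'a) \<Rightarrow> ('b \<Rightarrow> 'a) \<Rightarrow> 'a set set"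
  for pi h where
  letter: "{h a} \<in> Sat pi h"
| unit: "{om_one pi} \<in> Sat pi h"
| mul: "X \<in> Sat pi h \<Longrightarrow> Y \<in> Sat pi h \<Longrightarrow> pmul pi X Y \<in> Sat pi h"
| sharp: "X \<in> Sat pi h \<Longrightarrow> psharp pi X \<in> Sat pi h"
| omega: "X \<in> Sat pi h \<Longrightarrow> pomega pi X \<in> Sat pi h"

end

theory Submission
  imports Defs "HOL-Library.Ramsey" "HOL-Library.Infinite_Set"
begin


lemma womega_natLeq: "womega = natLeq" by (simp add: womega_def natLeq_def)
lemma Well_order_womega: "Well_order womega" by (simp add: womega_natLeq natLeq_Well_order)
lemma Field_womega[simp]: "Field womega = UNIV" by (simp add: womega_natLeq Field_natLeq)
lemma w2_Restr: "w2 = Restr womega {0,1}" by (auto simp: w2_def womega_def)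
lemma Well_order_w2: "Well_order w2" unfolding w2_Restr by (rule Well_order_Restr[OF Well_order_womega])
lemma Field_w2[simp]: "Field w2 = {0,1}" by (auto simp: w2_def Field_def)
lemma Well_order_empty: "Well_order {}"
  by (simp add: well_order_on_def linear_order_on_def partial_order_on_def preorder_on_def
       refl_on_def trans_def antisym_def total_on_def)
lemma Well_order_single: "Well_order {(i::nat,i)}"
proof -
  have "{(i,i)} = Restr womega {i}" by (auto simp: womega_def)
  thus ?thesis using Well_order_Restr[OF Well_order_womega] by metis
qed

primrec fp :: "(nat rel \<Rightarrow> (nat \<Rightarrow> 'a) \<Rightarrow> 'a) \<Rightarrow> (nat \<Rightarrow> 'a) \<Rightarrow> nat \<Rightarrow> nat \<Rightarrow> 'a" where
  "fp pi f a 0 = om_one pi"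
| "fp pi f a (Suc n) = om_mult pi (fp pi f a n) (f (a + n))"

lemma fp_cong: "(\<And>i. i < n \<Longrightarrow> f (a + i) = f' (a' + i)) \<Longrightarrow> fp pi f a n = fp pi f' a' n"
  by (induction n) auto

lemma Field_Restr_womega[simp]: "Field (Restr womega A) = A"
  by (auto simp: Field_def womega_def)

lemma Restr_Restr: "Restr (Restr r A) B = Restr r (A \<inter> B)" by blast

lemma WO_Restr_womega: "Well_order (Restr womega A)"
  by (rule Well_order_Restr[OF Well_order_womega])

locale OM =
  fixes C :: "'a set" and pi :: "nat rel \<Rightarrow> (nat \<Rightarrow> 'a) \<Rightarrow> 'a"
  assumes om: "ordinal_monoid C pi"
begin

lemmas omp1 = om[unfolded ordinal_monoid_def, THEN conjunct1]
lemmas omp2 = om[unfolded ordinal_monoid_def, THEN conjunct2, THEN conjunct1]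
lemmas omp3 = om[unfolded ordinal_monoid_def, THEN conjunct2, THEN conjunct2, THEN conjunct1]
lemmas omp4 = om[unfolded ordinal_monoid_def, THEN conjunct2, THEN conjunct2, THEN conjunct2]

lemma closed: assumes "Well_order r" "\<And>i. i \<in> Field r \<Longrightarrow> f i \<in> C" shows "pi r f \<in> C"
proof -
  have "om_word C r f" using assms unfolding om_word_def by blast
  then show ?thesis by (rule omp1[rule_format])
qed

lemma cong: assumes "Well_order r" "\<And>i. i \<in> Field r \<Longrightarrow> f i \<in> C" "\<And>i. i \<in> Field r \<Longrightarrow> f i = f' i"
  shows "pi r f = pi r f'"
proof -
  have w: "om_word C r f" using assms unfolding om_word_def by blast
  show ?thesis by (rule omp2[rule_format, OF w]) (rule assms(3))
qed

lemma single: "f i \<in> C \<Longrightarrow> pi {(i,i)} f = f i"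
  by (rule omp3[rule_format])

lemma assoc0: assumes "Well_order r" "\<And>i. i \<in> Field r \<Longrightarrow> f i \<in> C" "Well_order s"
   "g ` Field r \<subseteq> Field s" "\<And>i j. (i,j) \<in> r \<Longrightarrow> (g i, g j) \<in> s"
  shows "pi s (\<lambda>j. pi (Restr r {i \<in> Field r. g i = j}) f) = pi r f"
proof -
  have w: "om_word C r f" using assms unfolding om_word_def by blast
  show ?thesis by (rule omp4[rule_format, OF w assms(3) assms(4)]) (rule assms(5))
qed

lemma assoc: assumes "Well_order r" "\<And>i. i \<in> Field r \<Longrightarrow> f i \<in> C" "Well_order s"
   "\<And>i. i \<in> Field r \<Longrightarrow> g i \<in> Field s" "\<And>i j. (i,j) \<in> r \<Longrightarrow> (g i, g j) \<in> s"
   "\<And>j. j \<in> Field s \<Longrightarrow> G j = pi (Restr r {i \<in> Field r. g i = j}) f"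
 shows "pi s G = pi r f"
proof -
  have "pi s G = pi s (\<lambda>j. pi (Restr r {i \<in> Field r. g i = j}) f)"
  proof (rule cong[OF assms(3)])
    fix j assume j: "j \<in> Field s"
    show "G j \<in> C" unfolding assms(6)[OF j]
    proof (rule closed)
      show "Well_order (Restr r {i \<in> Field r. g i = j})" by (rule Well_order_Restr[OF assms(1)])
      fix i assume "i \<in> Field (Restr r {i \<in> Field r. g i = j})"
      then have "i \<in> {i \<in> Field r. g i = j}" by (rule subsetD[OF Field_Restr_subset])
      then show "f i \<in> C" using assms(2) by simp
    qed
    show "G j = pi (Restr r {i \<in> Field r. g i = j}) f" using assms(6)[OF j] .
  qed
  also have "\<dots> = pi r f"
    by (rule assoc0[OF assms(1) assms(2) assms(3) image_subsetI[OF assms(4)] assms(5)])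
  finally show ?thesis .
qed

lemma one_eq: "pi {} f = om_one pi"
  unfolding om_one_def by (rule cong) (auto simp: Well_order_empty)

lemma one_C: "om_one pi \<in> C"
  unfolding om_one_def by (rule closed) (auto simp: Well_order_empty)

lemma mult_C: "x \<in> C \<Longrightarrow> y \<in> C \<Longrightarrow> om_mult pi x y \<in> C"
  unfolding om_mult_def by (rule closed[OF Well_order_w2]) auto

lemma omega_C: "x \<in> C \<Longrightarrow> om_omega pi x \<in> C"
  unfolding om_omega_def by (rule closed[OF Well_order_womega]) auto


lemma fp_C: "(\<And>i. f i \<in> C) \<Longrightarrow> fp pi f a n \<in> C"
  by (induction n) (auto simp: one_C mult_C)

lemma seg: assumes f: "\<And>i. f i \<in> C" shows "pi (Restr womega {a..<a+n}) f = fp pi f a n"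
proof (induction n)
  case 0
  then show ?case using one_eq by simp
next
  case (Suc n)
  let ?r = "Restr womega {a..<a+Suc n}"
  let ?g = "\<lambda>i. if i < a+n then 0 else (1::nat)"
  let ?G = "\<lambda>j. if j = 0 then fp pi f a n else f (a+n)"
  have "pi w2 ?G = pi ?r f"
  proof (rule assoc[OF WO_Restr_womega _ Well_order_w2])
    show "\<And>i. i \<in> Field ?r \<Longrightarrow> f i \<in> C" using f by blast
    show "\<And>i. i \<in> Field ?r \<Longrightarrow> ?g i \<in> Field w2" by auto
    show "\<And>i j. (i,j) \<in> ?r \<Longrightarrow> (?g i, ?g j) \<in> w2" by (auto simp: w2_def womega_def)
    fix j assume "j \<in> Field w2"
    then consider "j = 0" | "j = 1" by auto
    then show "?G j = pi (Restr ?r {i \<in> Field ?r. ?g i = j}) f"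
    proof cases
      case 1
      have e: "{i \<in> Field ?r. ?g i = j} = {a..<a+n}" unfolding Field_Restr_womega using 1 by auto
      have "{a..<a+Suc n} \<inter> {a..<a+n} = {a..<a+n}" by auto
      then have "Restr ?r {i \<in> Field ?r. ?g i = j} = Restr womega {a..<a+n}" unfolding e Restr_Restr by simp
      then show ?thesis using 1 Suc by simp
    next
      case 2
      have "Restr ?r {i \<in> Field ?r. ?g i = j} = {(a+n,a+n)}" unfolding Field_Restr_womega using 2 by (auto simp: womega_def)
      then show ?thesis using 2 single[of f "a+n", OF f] by simp
    qed
  qed
  moreover have "pi w2 ?G = fp pi f a (Suc n)"
    by (simp add: om_mult_def)
  ultimately show ?case by simp
qed

lemma left_unit: "x \<in> C \<Longrightarrow> om_mult pi (om_one pi) x = x"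
proof -
  assume x: "x \<in> C"
  have "pi (Restr womega {0..<0+1}) (\<lambda>_. x) = fp pi (\<lambda>_. x) 0 1" by (rule seg) (simp add: x)
  moreover have "Restr womega {0..<0+1} = {(0,0)}" by (auto simp: womega_def)
  ultimately show ?thesis using single[of "\<lambda>_. x" 0] x by simp
qed

lemma right_unit: assumes x: "x \<in> C" shows "om_mult pi x (om_one pi) = x"
proof -
  let ?r = "{(0::nat,0::nat)}"
  have "pi w2 (\<lambda>j. if j = 0 then x else om_one pi) = pi ?r (\<lambda>_. x)"
  proof (rule assoc[OF Well_order_single _ Well_order_w2, where g = "\<lambda>_. 0"])
    fix j assume "j \<in> Field w2"
    then consider "j = 0" | "j = 1" by auto
    then show "(if j = 0 then x else om_one pi) = pi (Restr ?r {i \<in> Field ?r. 0 = j}) (\<lambda>_. x)"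
    proof cases
      case 1 then show ?thesis using single[of "\<lambda>_. x" 0] x by (simp add: Field_def)
    next
      case 2 then show ?thesis using one_eq by simp
    qed
  qed (auto simp: x w2_def)
  then show ?thesis using single[of "\<lambda>_. x" 0] x by (simp add: om_mult_def)
qed

lemma mult_assoc: assumes x: "x \<in> C" and y: "y \<in> C" and z: "z \<in> C"
  shows "om_mult pi (om_mult pi x y) z = om_mult pi x (om_mult pi y z)"
proof -
  define f where "f = (\<lambda>i::nat. if i = 0 then x else if i = 1 then y else z)"
  have fC: "\<And>i. f i \<in> C" using x y z by (simp add: f_def)
  let ?r = "Restr womega {0..<0+3}"
  have "pi ?r f = fp pi f 0 3" by (rule seg[OF fC])
  also have "\<dots> = om_mult pi (om_mult pi x y) z"
    by (simp add: f_def numeral_3_eq_3 left_unit x)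
  finally have 1: "pi ?r f = om_mult pi (om_mult pi x y) z" .
  let ?g = "\<lambda>i. if i = 0 then 0 else (1::nat)"
  have eq2: "pi w2 (\<lambda>j. if j = 0 then x else om_mult pi y z) = pi ?r f"
  proof (rule assoc[OF WO_Restr_womega _ Well_order_w2])
    show "\<And>i. i \<in> Field ?r \<Longrightarrow> f i \<in> C" using fC by blast
    show "\<And>i. i \<in> Field ?r \<Longrightarrow> ?g i \<in> Field w2" by auto
    show "\<And>i j. (i,j) \<in> ?r \<Longrightarrow> (?g i, ?g j) \<in> w2" by (auto simp: w2_def womega_def)
    fix j assume "j \<in> Field w2"
    then consider "j = 0" | "j = 1" by auto
    then show "(if j = 0 then x else om_mult pi y z) = pi (Restr ?r {i \<in> Field ?r. ?g i = j}) f"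
    proof cases
      case 1
      have "Restr ?r {i \<in> Field ?r. ?g i = j} = {(0,0)}" unfolding Field_Restr_womega using 1 by (auto simp: womega_def)
      then show ?thesis using 1 single[of f 0, OF fC] by (simp add: f_def)
    next
      case 2
      have e: "{i \<in> Field ?r. ?g i = j} = {1..<1+2}" unfolding Field_Restr_womega using 2 by auto
      have "{0..<0+3} \<inter> {1..<1+2} = {1..<(1::nat)+2}" by auto
      then have "Restr ?r {i \<in> Field ?r. ?g i = j} = Restr womega {1..<1+2}" unfolding e Restr_Restr by simp
      moreover have "pi (Restr womega {1..<1+2}) f = fp pi f 1 2" by (rule seg[OF fC])
      ultimately show ?thesis using 2 by (simp add: f_def numeral_2_eq_2 left_unit y)
    qed
  qed
  have om: "om_mult pi x (om_mult pi y z) = pi w2 (\<lambda>j. if j = 0 then x else om_mult pi y z)"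
    by (rule om_mult_def)
  show ?thesis using 1 eq2 om by metis
qed

lemma block: assumes f: "\<And>i. f i \<in> C" and h: "strict_mono h" "h 0 = 0"
  shows "pi womega f = pi womega (\<lambda>a. fp pi f (h a) (h (Suc a) - h a))"
proof -
  define g where "g i = Max {a. h a \<le> i}" for i
  have ge: "a \<le> h a" for a
    by (induction a) (auto simp: Suc_le_eq intro: le_less_trans strict_monoD[OF h(1)])
  have fin: "finite {a. h a \<le> i}" for i
    by (rule finite_subset[of _ "{..i}"]) (auto intro: le_trans ge)
  have ne: "0 \<in> {a. h a \<le> i}" for i using h(2) by simp
  have gchar: "g i = a \<longleftrightarrow> h a \<le> i \<and> i < h (Suc a)" for i a
  proof
    assume ga: "g i = a"
    have "g i \<in> {a. h a \<le> i}" unfolding g_def using fin ne by (intro Max_in) auto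
    moreover have "\<not> h (Suc (g i)) \<le> i"
    proof
      assume "h (Suc (g i)) \<le> i"
      then have "Suc (g i) \<le> g i" unfolding g_def[of i] using fin by (intro Max_ge) auto
      then show False by simp
    qed
    ultimately show "h a \<le> i \<and> i < h (Suc a)" using ga by auto
  next
    assume a: "h a \<le> i \<and> i < h (Suc a)"
    show "g i = a" unfolding g_def
    proof (rule Max_eqI[OF fin])
      fix c assume "c \<in> {a. h a \<le> i}"
      then have "h c < h (Suc a)" using a by simp
      then show "c \<le> a" using strict_mono_less[OF h(1)] by fastforce
    qed (use a in auto)
  qed
  have gmono: "g i \<le> g j" if "i \<le> j" for i j
  proof -
    have "h (g i) \<le> i" using gchar by blast
    then show ?thesis unfolding g_def[of j] using fin that by (intro Max_ge) auto
  qed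
  show ?thesis
  proof (rule assoc[OF Well_order_womega _ Well_order_womega, symmetric])
    show "\<And>i. i \<in> Field womega \<Longrightarrow> f i \<in> C" using f by blast
    show "\<And>i. i \<in> Field womega \<Longrightarrow> g i \<in> Field womega" by simp
    show "\<And>i j. (i,j) \<in> womega \<Longrightarrow> (g i, g j) \<in> womega" using gmono by (auto simp: womega_def)
    fix a
    have "{i \<in> Field womega. g i = a} = {h a..<h a + (h (Suc a) - h a)}"
      using gchar strict_monoD[OF h(1), of a "Suc a"] by auto
    then show "fp pi f (h a) (h (Suc a) - h a) = pi (Restr womega {i \<in> Field womega. g i = a}) f"
      using seg[OF f] by simp
  qed
qed

lemma uvv: assumes u: "u \<in> C" and v: "v \<in> C"
  shows "pi womega (\<lambda>a. if a = 0 then u else v) = om_mult pi u (om_omega pi v)"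
proof -
  let ?f = "\<lambda>a::nat. if a = 0 then u else v"
  have fC: "\<And>i. ?f i \<in> C" using u v by simp
  let ?r1 = "Restr womega {i. i \<noteq> 0}"
  have tail: "pi womega (\<lambda>_. v) = pi ?r1 ?f"
  proof (rule assoc[OF WO_Restr_womega _ Well_order_womega, where g = "\<lambda>i. i - 1"])
    show "\<And>i. i \<in> Field ?r1 \<Longrightarrow> ?f i \<in> C" using fC by blast
    show "\<And>i. i \<in> Field ?r1 \<Longrightarrow> i - 1 \<in> Field womega" by simp
    show "\<And>i j. (i,j) \<in> ?r1 \<Longrightarrow> (i - 1, j - 1) \<in> womega" by (auto simp: womega_def)
    fix j
    have "Restr ?r1 {i \<in> Field ?r1. i - 1 = j} = {(Suc j, Suc j)}"
      unfolding Field_Restr_womega by (auto simp: womega_def)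
    then show "v = pi (Restr ?r1 {i \<in> Field ?r1. i - 1 = j}) ?f"
      using single[of ?f "Suc j"] v by simp
  qed
  let ?g = "\<lambda>i. if i = 0 then 0 else (1::nat)"
  have "pi w2 (\<lambda>j. if j = 0 then u else om_omega pi v) = pi womega ?f"
  proof (rule assoc[OF Well_order_womega _ Well_order_w2])
    show "\<And>i. i \<in> Field womega \<Longrightarrow> ?f i \<in> C" using fC by blast
    show "\<And>i. i \<in> Field womega \<Longrightarrow> ?g i \<in> Field w2" by auto
    show "\<And>i j. (i,j) \<in> womega \<Longrightarrow> (?g i, ?g j) \<in> w2" by (auto simp: w2_def womega_def)
    fix j assume "j \<in> Field w2"
    then consider "j = 0" | "j = 1" by auto
    then show "(if j = 0 then u else om_omega pi v) = pi (Restr womega {i \<in> Field womega. ?g i = j}) ?f"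
    proof cases
      case 1
      have "{i \<in> Field womega. ?g i = j} = {0}" using 1 by auto
      then have "Restr womega {i \<in> Field womega. ?g i = j} = {(0,0)}" by (simp add: womega_def)
      then show ?thesis using 1 single[of ?f 0] u by simp
    next
      case 2
      have "{i \<in> Field womega. ?g i = j} = {i. i \<noteq> 0}" using 2 by auto
      then show ?thesis using 2 tail by (simp add: om_omega_def)
    qed
  qed
  then show ?thesis by (simp add: om_mult_def)
qed

lemma ramsey_om: assumes fin: "finite C" and f: "\<And>i. f i \<in> C"
  shows "\<exists>n m. n \<ge> 1 \<and> m \<ge> 1 \<and> pi womega f = om_mult pi (fp pi f 0 n) (om_omega pi (fp pi f n m))"
proof -
  obtain idx :: "'a \<Rightarrow> nat" and N where idx: "idx ` C = {i. i < N}" "inj_on idx C"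
    using finite_imp_inj_to_nat_seg[OF fin] by blast
  define col where "col X = idx (fp pi f (Min X) (Max X - Min X))" for X
  have colN: "col X < N" for X
  proof -
    have "idx (fp pi f (Min X) (Max X - Min X)) \<in> idx ` C" using fp_C[OF f] by (rule imageI)
    then show ?thesis unfolding col_def idx(1) by simp
  qed
  have "\<forall>x\<in>UNIV. \<forall>y\<in>UNIV. x \<noteq> y \<longrightarrow> col {x, y} < N"
    using colN by simp
  from Ramsey2[OF infinite_UNIV_nat this] obtain Y t where
    Y: "infinite Y" "\<forall>x\<in>Y. \<forall>y\<in>Y. x \<noteq> y \<longrightarrow> col {x, y} = t" by blast
  define e where "e = enumerate Y"
  have emono: "a < b \<Longrightarrow> e a < e b" for a b unfolding e_def using enumerate_mono Y(1) by blast
  have eY: "e a \<in> Y" for a unfolding e_def using enumerate_in_set Y(1) by blast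
  define h where "h a = (if a = 0 then 0 else e a)" for a
  have hm: "strict_mono h"
  proof (rule strict_monoI)
    fix a b :: nat assume "a < b"
    then show "h a < h b" unfolding h_def using emono[of 0 b] emono[of a b] by auto
  qed
  have h0: "h 0 = 0" by (simp add: h_def)
  define u where "u = fp pi f 0 (e 1)"
  define v where "v = fp pi f (e 1) (e 2 - e 1)"
  have colv: "fp pi f (e a) (e (Suc a) - e a) = v" if "a \<ge> 1" for a
  proof -
    have "col {e a, e (Suc a)} = t" "col {e 1, e 2} = t"
      using Y(2) eY emono[of a "Suc a"] emono[of 1 2] by auto
    moreover have "Min {e a, e (Suc a)} = e a" "Max {e a, e (Suc a)} = e (Suc a)"
      "Min {e 1, e 2} = e 1" "Max {e 1, e 2} = e 2"
      using emono[of a "Suc a"] emono[of 1 2] by auto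
    ultimately have "idx (fp pi f (e a) (e (Suc a) - e a)) = idx v"
      unfolding col_def v_def by simp
    then show ?thesis unfolding v_def by (rule inj_onD[OF idx(2)]) (rule fp_C[OF f])+
  qed
  have "pi womega f = pi womega (\<lambda>a. fp pi f (h a) (h (Suc a) - h a))"
    by (rule block[OF f hm h0])
  also have "\<dots> = pi womega (\<lambda>a. if a = 0 then u else v)"
  proof (rule cong[OF Well_order_womega])
    fix a
    show "fp pi f (h a) (h (Suc a) - h a) \<in> C" using fp_C[OF f] .
    show "fp pi f (h a) (h (Suc a) - h a) = (if a = 0 then u else v)"
      using colv[of a] by (cases "a = 0") (auto simp: h_def u_def)
  qed
  also have "\<dots> = om_mult pi u (om_omega pi v)"
    by (rule uvv) (auto simp: u_def v_def fp_C f)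
  finally show ?thesis using emono[of 0 1] emono[of 1 2] unfolding u_def v_def
    by (intro exI[of _ "e 1"] exI[of _ "e 2 - e 1"]) auto
qed

lemma fp_S: "(\<And>x y. x \<in> S \<Longrightarrow> y \<in> S \<Longrightarrow> om_mult pi x y \<in> S) \<Longrightarrow> om_one pi \<in> S
   \<Longrightarrow> (\<And>i. G i \<in> S) \<Longrightarrow> fp pi G a n \<in> S"
  by (induction n) auto

lemma closure_Restr:
  assumes fin: "finite C" and SC: "S \<subseteq> C" and one: "om_one pi \<in> S"
    and mul: "\<And>x y. x \<in> S \<Longrightarrow> y \<in> S \<Longrightarrow> om_mult pi x y \<in> S"
    and ome: "\<And>x. x \<in> S \<Longrightarrow> om_omega pi x \<in> S"
  shows "Well_order r \<Longrightarrow> \<forall>A F. A \<subseteq> Field r \<longrightarrow> (\<forall>i\<in>A. F i \<in> S) \<longrightarrow> pi (Restr r A) F \<in> S"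
proof (induction r rule: wf_induct[OF wf_ordLess])
  case (1 r)
  have IH: "pi (Restr r0 B) G \<in> S" if "(r0, r) \<in> ordLess" "B \<subseteq> Field r0" "\<forall>i\<in>B. G i \<in> S" for r0 B G
  proof -
    have "Well_order r0" using that(1) unfolding ordLess_def by blast
    then show ?thesis using "1.IH" that by blast
  qed
  note WO = "1.prems"
  show ?case
  proof (intro allI impI)
  fix A F assume AF: "A \<subseteq> Field r" and FS: "\<forall>i\<in>A. F i \<in> S"
  have refl: "refl_on (Field r) r" and tr: "trans r" and anti: "antisym r" and tot: "total_on (Field r) r"
    using WO by (auto simp: well_order_on_def linear_order_on_def partial_order_on_def preorder_on_def)
  have FA: "Field (Restr r A) = A" using Refl_Field_Restr2[OF refl AF] .
  have WOA: "Well_order (Restr r A)" using Well_order_Restr[OF WO] .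
  have FC: "\<And>i. i \<in> Field (Restr r A) \<Longrightarrow> F i \<in> C" using FS SC FA by auto
  have sub: "pi (Restr r B) F \<in> S" if "a \<in> Field r" "B \<subseteq> underS r a" "B \<subseteq> A" for a B
  proof -
    let ?r0 = "Restr r (underS r a)"
    have "Field r \<noteq> {}" using that(1) by auto
    then have lt: "(?r0, r) \<in> ordLess" by (rule underS_Restr_ordLess[OF WO])
    have uF: "underS r a \<subseteq> Field r" using underS_Field[of _ r a] by blast
    note lt
    moreover have "B \<subseteq> Field ?r0" using Refl_Field_Restr2[OF refl uF] that(2) by simp
    moreover have "\<forall>i\<in>B. F i \<in> S" using FS that(3) by blast
    ultimately have "pi (Restr ?r0 B) F \<in> S" by (rule IH)
    moreover have "Restr ?r0 B = Restr r B" using that(2) by auto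
    ultimately show ?thesis by simp
  qed
  show "pi (Restr r A) F \<in> S"
  proof (cases "A = {}")
    case True
    then show ?thesis using one one_eq by simp
  next
    case Ane: False
    show ?thesis
    proof (cases "\<exists>m\<in>A. \<forall>i\<in>A. (i,m) \<in> r")
      case True
      then obtain m where m: "m \<in> A" "\<And>i. i \<in> A \<Longrightarrow> (i,m) \<in> r" by blast
      let ?B = "A - {m}"
      have mF: "m \<in> Field r" using m AF by auto
      have PB: "pi (Restr r ?B) F \<in> S"
        by (rule sub[OF mF]) (use m in \<open>auto simp: underS_def\<close>)
      let ?g = "\<lambda>i. if i = m then 1 else (0::nat)"
      let ?G = "\<lambda>j. if j = 0 then pi (Restr r ?B) F else F m"
      have "pi w2 ?G = pi (Restr r A) F"
      proof (rule assoc[OF WOA FC Well_order_w2])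
        show "\<And>i. i \<in> Field (Restr r A) \<Longrightarrow> ?g i \<in> Field w2" by auto
        show "(?g i, ?g j) \<in> w2" if "(i,j) \<in> Restr r A" for i j
        proof (cases "i = m")
          case True
          then have "j = m" using that m anti by (auto dest: antisymD)
          then show ?thesis using True by (simp add: w2_def)
        next
          case False
          then show ?thesis by (auto simp: w2_def)
        qed
        fix j assume "j \<in> Field w2"
        then consider "j = 0" | "j = 1" by auto
        then show "?G j = pi (Restr (Restr r A) {i \<in> Field (Restr r A). ?g i = j}) F"
        proof cases
          case 1
          have "Restr (Restr r A) {i \<in> Field (Restr r A). ?g i = j} = Restr r ?B"
            unfolding FA using 1 by auto
          then show ?thesis using 1 by simp
        next
          case 2
          have "(m,m) \<in> r" using refl mF by (auto simp: refl_on_def)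
          then have "Restr (Restr r A) {i \<in> Field (Restr r A). ?g i = j} = {(m,m)}"
            unfolding FA using 2 m by auto
          then show ?thesis using 2 single[of F m] FS SC m by auto
        qed
      qed
      then have "pi (Restr r A) F = om_mult pi (pi (Restr r ?B) F) (F m)" by (simp add: om_mult_def)
      then show ?thesis using mul PB FS m by simp
    next
      case False
      note nomx = False
      let ?lt = "\<lambda>a b. (a,b) \<in> r \<and> a \<noteq> b"
      have nomax: "\<exists>z\<in>A. ?lt k z" if "k \<in> A" for k
      proof -
        have "\<not> (\<forall>i\<in>A. (i,k) \<in> r)" using nomx that by auto
        then obtain i where i: "i \<in> A" "(i,k) \<notin> r" by auto
        then have "i \<noteq> k" using refl that AF by (auto simp: refl_on_def)
        then have "(k,i) \<in> r" using tot i that AF by (auto simp: total_on_def)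
        then show ?thesis using i \<open>i \<noteq> k\<close> by blast
      qed
      define z where "z k = (SOME z. z \<in> A \<and> (k \<in> A \<longrightarrow> ?lt k z))" for k
      have z: "z k \<in> A \<and> (k \<in> A \<longrightarrow> ?lt k (z k))" for k
        unfolding z_def
      proof (rule someI_ex)
        show "\<exists>x. x \<in> A \<and> (k \<in> A \<longrightarrow> ?lt k x)"
          using nomax Ane by (cases "k \<in> A") auto
      qed
      define g where "g i = (LEAST k. ?lt i (z k))" for i
      have gi: "?lt i (z (g i))" if "i \<in> A" for i
        unfolding g_def by (rule LeastI[of _ i]) (use z that in blast)
      have gmono: "g i \<le> g j" if "(i,j) \<in> r" "i \<in> A" "j \<in> A" for i j
      proof -
        have "?lt j (z (g j))" using gi that by blast
        then have "?lt i (z (g j))" using that tr anti by (auto dest: transD antisymD)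
        then show ?thesis unfolding g_def[of i] by (rule Least_le)
      qed
      let ?G = "\<lambda>k. pi (Restr (Restr r A) {i \<in> Field (Restr r A). g i = k}) F"
      have eq: "pi womega ?G = pi (Restr r A) F"
      proof (rule assoc0[OF WOA FC Well_order_womega])
        show "g ` Field (Restr r A) \<subseteq> Field womega" by simp
        fix i j assume "(i,j) \<in> Restr r A"
        then have "g i \<le> g j" using gmono by blast
        then show "(g i, g j) \<in> womega" by (simp add: womega_def)
      qed
      have GS: "?G k \<in> S" for k
      proof -
        have "Restr (Restr r A) {i \<in> Field (Restr r A). g i = k} = Restr r {i \<in> A. g i = k}"
          unfolding FA by auto
        moreover have "pi (Restr r {i \<in> A. g i = k}) F \<in> S"
        proof (rule sub)
          show "z k \<in> Field r" using z AF by blast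
          show "{i \<in> A. g i = k} \<subseteq> underS r (z k)" using gi by (auto simp: underS_def)
        qed auto
        ultimately show ?thesis by simp
      qed
      have GC: "\<And>k. ?G k \<in> C" using GS SC by blast
      obtain n m where nm: "n \<ge> 1 \<and> m \<ge> 1 \<and> pi womega ?G = om_mult pi (fp pi ?G 0 n) (om_omega pi (fp pi ?G n m))"
        using ramsey_om[OF fin GC] by iprover
      have X: "pi (Restr r A) F = om_mult pi (fp pi ?G 0 n) (om_omega pi (fp pi ?G n m))"
        using eq[symmetric] nm[THEN conjunct2, THEN conjunct2] by (rule trans)
      have S1: "fp pi ?G 0 n \<in> S" by (rule fp_S[OF mul one GS])
      have S2: "fp pi ?G n m \<in> S" by (rule fp_S[OF mul one GS])
      show ?thesis unfolding X by (rule mul[OF S1 ome[OF S2]])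
    qed
  qed
  qed
qed

lemma closure:
  assumes "finite C" and "S \<subseteq> C" and "om_one pi \<in> S"
    and "\<And>x y. x \<in> S \<Longrightarrow> y \<in> S \<Longrightarrow> om_mult pi x y \<in> S"
    and "\<And>x. x \<in> S \<Longrightarrow> om_omega pi x \<in> S"
    and "om_word S r F"
  shows "pi r F \<in> S"
proof -
  have WO: "Well_order r" and FS: "\<forall>i\<in>Field r. F i \<in> S" using assms(6) unfolding om_word_def by auto
  have "\<forall>A F. A \<subseteq> Field r \<longrightarrow> (\<forall>i\<in>A. F i \<in> S) \<longrightarrow> pi (Restr r A) F \<in> S"
    by (rule closure_Restr[OF assms(1-5) WO])
  then have "pi (Restr r (Field r)) F \<in> S" using FS by blast
  then show ?thesis by (simp add: Restr_Field)
qed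

end


definition PI :: "(nat rel \<Rightarrow> (nat \<Rightarrow> 'a) \<Rightarrow> 'a) \<Rightarrow> nat rel \<Rightarrow> (nat \<Rightarrow> 'a set) \<Rightarrow> 'a set" where
  "PI pi r F = {pi r f | f. \<forall>i\<in>Field r. f i \<in> F i}"

lemma Field_RestrD: "i \<in> Field (Restr r B) \<Longrightarrow> i \<in> B"
  by (rule subsetD[OF Field_Restr_subset])

lemma Field_RestrI: "(i,i) \<in> r \<Longrightarrow> i \<in> B \<Longrightarrow> i \<in> Field (Restr r B)"
  by (auto simp: Field_def)

context OM
begin

lemma PI_closed: "om_word (Pow C) r F \<Longrightarrow> PI pi r F \<in> Pow C"
proof -
  assume w: "om_word (Pow C) r F"
  then have WO: "Well_order r" and FC: "\<And>i. i \<in> Field r \<Longrightarrow> F i \<subseteq> C" unfolding om_word_def by auto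
  show ?thesis unfolding Pow_iff
  proof
    fix x assume "x \<in> PI pi r F"
    then obtain f where x: "x = pi r f" and f: "\<forall>i\<in>Field r. f i \<in> F i" unfolding PI_def by blast
    have "pi r f \<in> C"
    proof (rule closed[OF WO])
      fix i assume "i \<in> Field r" then show "f i \<in> C" using f FC by blast
    qed
    then show "x \<in> C" using x by simp
  qed
qed

lemma PI_cong: "(\<And>i. i \<in> Field r \<Longrightarrow> F i = F' i) \<Longrightarrow> PI pi r F = PI pi r F'"
  unfolding PI_def by (metis (no_types, lifting))

lemma PI_single: "F i \<subseteq> C \<Longrightarrow> PI pi {(i,i)} F = F i"
proof -
  assume FC: "F i \<subseteq> C"
  have Fi: "Field {(i,i)} = {i}" by (auto simp: Field_def)
  show ?thesis
  proof
    show "PI pi {(i,i)} F \<subseteq> F i"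
    proof
      fix x assume "x \<in> PI pi {(i,i)} F"
      then obtain f where x: "x = pi {(i,i)} f" and f: "f i \<in> F i" unfolding PI_def Fi by blast
      have "pi {(i,i)} f = f i" using f FC by (intro single) blast
      then show "x \<in> F i" using x f by simp
    qed
    show "F i \<subseteq> PI pi {(i,i)} F"
    proof
      fix x assume x: "x \<in> F i"
      have "pi {(i,i)} (\<lambda>_. x) = x" using x FC by (intro single[of "\<lambda>_. x", simplified]) blast
      then show "x \<in> PI pi {(i,i)} F" unfolding PI_def Fi using x by force
    qed
  qed
qed

lemma PI_assoc:
  assumes w: "om_word (Pow C) r F" and s: "Well_order s" and gs: "g ` Field r \<subseteq> Field s"
    and mono: "\<And>i j. (i,j) \<in> r \<Longrightarrow> (g i, g j) \<in> s"
  shows "PI pi s (\<lambda>j. PI pi (Restr r {i \<in> Field r. g i = j}) F) = PI pi r F"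
proof -
  have WO: "Well_order r" and FC: "\<And>i. i \<in> Field r \<Longrightarrow> F i \<subseteq> C" using w unfolding om_word_def by auto
  have refl: "refl_on (Field r) r"
    using WO by (auto simp: well_order_on_def linear_order_on_def partial_order_on_def preorder_on_def)
  define R where "R j = Restr r {i \<in> Field r. g i = j}" for j
  have RF: "i \<in> Field r \<and> g i = j" if "i \<in> Field (R j)" for i j
  proof -
    have "i \<in> {i \<in> Field r. g i = j}" using that unfolding R_def by (rule Field_RestrD)
    then show ?thesis by simp
  qed
  have RI: "i \<in> Field r \<Longrightarrow> i \<in> Field (R (g i))" for i
    unfolding R_def by (rule Field_RestrI) (use refl in \<open>auto simp: refl_on_def\<close>)
  have WR: "Well_order (R j)" for j unfolding R_def by (rule Well_order_Restr[OF WO])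
  show ?thesis unfolding R_def[symmetric]
  proof
    show "PI pi r F \<subseteq> PI pi s (\<lambda>j. PI pi (R j) F)"
    proof
      fix x assume "x \<in> PI pi r F"
      then obtain f where x: "x = pi r f" and f: "\<forall>i\<in>Field r. f i \<in> F i" unfolding PI_def by blast
      have fC: "\<And>i. i \<in> Field r \<Longrightarrow> f i \<in> C" using f FC by blast
      have "pi s (\<lambda>j. pi (R j) f) = pi r f" unfolding R_def by (rule assoc0[OF WO fC s gs mono])
      moreover have "pi (R j) f \<in> PI pi (R j) F" for j
        unfolding PI_def using f RF by blast
      ultimately show "x \<in> PI pi s (\<lambda>j. PI pi (R j) F)" unfolding x PI_def by force
    qed
    show "PI pi s (\<lambda>j. PI pi (R j) F) \<subseteq> PI pi r F"
    proof
      fix x assume "x \<in> PI pi s (\<lambda>j. PI pi (R j) F)"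
      then obtain G where x: "x = pi s G" and G: "\<forall>j\<in>Field s. G j \<in> PI pi (R j) F"
        unfolding PI_def by blast
      have "\<forall>j\<in>Field s. \<exists>fj. G j = pi (R j) fj \<and> (\<forall>i\<in>Field (R j). fj i \<in> F i)"
        using G unfolding PI_def by blast
      then obtain phi where phi: "\<And>j. j \<in> Field s \<Longrightarrow> G j = pi (R j) (phi j) \<and> (\<forall>i\<in>Field (R j). phi j i \<in> F i)"
        by metis
      define f where "f i = phi (g i) i" for i
      have gsi: "i \<in> Field r \<Longrightarrow> g i \<in> Field s" for i using gs by blast
      have fF: "f i \<in> F i" if "i \<in> Field r" for i
        using phi[OF gsi[OF that]] RI[OF that] unfolding f_def by blast
      have fC: "\<And>i. i \<in> Field r \<Longrightarrow> f i \<in> C" using fF FC by blast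
      have GC: "G j \<in> C" if "j \<in> Field s" for j
      proof -
        have "G j \<in> PI pi (R j) F" using G that by blast
        moreover have "PI pi (R j) F \<in> Pow C"
        proof (rule PI_closed)
          show "om_word (Pow C) (R j) F" unfolding om_word_def using WR FC RF by blast
        qed
        ultimately show ?thesis by blast
      qed
      have "pi s G = pi s (\<lambda>j. pi (R j) f)"
      proof (rule cong[OF s])
        fix j assume j: "j \<in> Field s"
        show "G j \<in> C" using GC[OF j] .
        have "pi (R j) f = pi (R j) (phi j)"
        proof (rule cong[OF WR])
          fix i assume i: "i \<in> Field (R j)"
          then show "f i \<in> C" using fC RF by blast
          show "f i = phi j i" using RF[OF i] unfolding f_def by simp
        qed
        then show "G j = pi (R j) f" using phi[OF j] by simp
      qed
      also have "\<dots> = pi r f" unfolding R_def by (rule assoc0[OF WO fC s gs mono])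
      finally have "x = pi r f" using x by simp
      then show "x \<in> PI pi r F" unfolding PI_def using fF by blast
    qed
  qed
qed

lemma PI_om: "ordinal_monoid (Pow C) (PI pi)"
  unfolding ordinal_monoid_def
proof (intro conjI allI impI)
  show "\<And>r f. om_word (Pow C) r f \<Longrightarrow> PI pi r f \<in> Pow C" by (rule PI_closed)
  show "\<And>r f f'. om_word (Pow C) r f \<Longrightarrow> \<forall>i\<in>Field r. f i = f' i \<Longrightarrow> PI pi r f = PI pi r f'"
    by (rule PI_cong) blast
  show "\<And>i f. f i \<in> Pow C \<Longrightarrow> PI pi {(i, i)} f = f i" by (rule PI_single) blast
  show "\<And>r s f g. om_word (Pow C) r f \<Longrightarrow> Well_order s \<Longrightarrow> g ` Field r \<subseteq> Field s \<Longrightarrow>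
       \<forall>i j. (i, j) \<in> r \<longrightarrow> (g i, g j) \<in> s \<Longrightarrow>
       PI pi s (\<lambda>j. PI pi (Restr r {i \<in> Field r. g i = j}) f) = PI pi r f"
    by (rule PI_assoc) blast+
qed

lemma PI_ordered: "ordered_om (Pow C) (\<subseteq>) (PI pi)"
  unfolding ordered_om_def
proof (intro conjI ballI allI impI)
  fix r :: "nat rel" and f f' :: "nat \<Rightarrow> 'a set" assume "\<forall>i\<in>Field r. f i \<subseteq> f' i"
  then show "PI pi r f \<subseteq> PI pi r f'" unfolding PI_def by blast
qed auto

lemma PI_empty: "PI pi {} F = {om_one pi}"
  unfolding PI_def using one_eq by simp

lemma PI_one: "om_one (PI pi) = {om_one pi}"
  unfolding om_one_def by (rule PI_empty[unfolded om_one_def])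

lemma PI_mult: assumes XC: "X \<subseteq> C" and YC: "Y \<subseteq> C" shows "om_mult (PI pi) X Y = pmul pi X Y"
proof -
  have c: "pi w2 f = om_mult pi (f 0) (f 1)" if "f 0 \<in> C" "f 1 \<in> C" for f
    unfolding om_mult_def by (rule cong[OF Well_order_w2]) (use that in auto)
  show ?thesis
  proof
    show "om_mult (PI pi) X Y \<subseteq> pmul pi X Y"
    proof
      fix x assume "x \<in> om_mult (PI pi) X Y"
      then obtain f where x: "x = pi w2 f" and f: "\<forall>i\<in>{0,1}. f i \<in> (if i = 0 then X else Y)"
        unfolding om_mult_def[of "PI pi"] PI_def Field_w2 by blast
      have f0: "f 0 \<in> X" and f1: "f 1 \<in> Y" using f by auto
      have "x = om_mult pi (f 0) (f 1)" unfolding x using f0 f1 XC YC by (intro c) auto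
      then show "x \<in> pmul pi X Y" unfolding pmul_def using f0 f1 by blast
    qed
    show "pmul pi X Y \<subseteq> om_mult (PI pi) X Y"
    proof
      fix x assume "x \<in> pmul pi X Y"
      then obtain u v where x: "x = om_mult pi u v" and uv: "u \<in> X" "v \<in> Y" unfolding pmul_def by blast
      let ?f = "\<lambda>i::nat. if i = 0 then u else v"
      have "\<forall>i\<in>Field w2. ?f i \<in> (if i = 0 then X else Y)" using uv by auto
      moreover have "x = pi w2 ?f" unfolding x om_mult_def ..
      ultimately show "x \<in> om_mult (PI pi) X Y"
        unfolding om_mult_def[of "PI pi"] PI_def by blast
    qed
  qed
qed

end


lemma eventually_periodic:
  fixes s :: "nat \<Rightarrow> 'x"
  assumes fin: "finite (range s)" and step: "\<And>n. s (Suc n) = F (s n)"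
  shows "\<exists>N p. p > 0 \<and> (\<forall>n\<ge>N. s (n + p) = s n)"
proof -
  have "\<not> inj s"
  proof
    assume "inj s"
    then have "finite (UNIV :: nat set)" using finite_imageD[OF fin] by blast
    then show False by simp
  qed
  then obtain i j where ij: "i \<noteq> j" "s i = s j" unfolding inj_def by blast
  obtain a b where ab: "a < b" "s a = s b"
  proof (cases "i < j")
    case True then show ?thesis using that ij by blast
  next
    case False then have "j < i" using ij(1) by simp
    then show ?thesis using that ij(2) by (metis)
  qed
  have "s (a + t + (b - a)) = s (a + t)" for t
  proof (induction t)
    case 0 then show ?case using ab by simp
  next
    case (Suc t)
    have "s (a + Suc t + (b - a)) = F (s (a + t + (b - a)))" using step[of "a + t + (b - a)"] by simp
    also have "\<dots> = F (s (a + t))" using Suc by simp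
    also have "\<dots> = s (a + Suc t)" using step[of "a + t"] by simp
    finally show ?case .
  qed
  then have "\<forall>n\<ge>a. s (n + (b - a)) = s n"
    by (metis le_add_diff_inverse)
  then show ?thesis using ab(1) by (intro exI[of _ a] exI[of _ "b - a"]) simp
qed

lemma periodic_mult:
  assumes per: "\<forall>n\<ge>N. s (n + p) = s (n::nat)" and n: "n \<ge> N"
  shows "s (n + t * p) = s n"
proof (induction t)
  case 0 then show ?case by simp
next
  case (Suc t)
  have "s (n + Suc t * p) = s ((n + t * p) + p)" by (simp add: algebra_simps)
  also have "\<dots> = s (n + t * p)" using per n by simp
  finally show ?case using Suc by simp
qed

lemma periodic_cong:
  assumes per: "\<forall>n\<ge>N. s (n + p) = s (n::nat)" and i: "i \<ge> N" and j: "j \<ge> N"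
    and m: "i mod p = j mod p"
  shows "s i = s j"
proof -
  have *: "s x = s y" if "x \<le> y" "x \<ge> N" "x mod p = y mod p" for x y
  proof -
    have "p dvd (y - x)" using mod_eq_dvd_iff_nat[OF that(1), of p] that(3) by simp
    then obtain t where "y - x = p * t" by (elim dvdE)
    then have "y = x + t * p" using that(1) by (simp add: algebra_simps)
    then show ?thesis using periodic_mult[OF per that(2)] by simp
  qed
  show ?thesis
  proof (cases "i \<le> j")
    case True then show ?thesis using * i m by blast
  next
    case False then show ?thesis using * j m by (metis nat_le_linear)
  qed
qed

lemma bangp_char:
  assumes p: "p > 0" and per: "\<forall>n\<ge>N. spow m e a (n + p) = spow m e a n"
    and j: "j \<ge> N" and jk: "int j mod int p = k mod int p"
  shows "bangp m e a k = spow m e a j"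
proof -
  let ?s = "spow m e a"
  define N' where "N' = p + N + nat \<bar>k\<bar>"
  have ev: "?s (nat (int (fact n) + k)) = ?s j" if n: "n \<ge> N'" for n
  proof -
    have "int n \<le> int (fact n)" by (simp only: of_nat_le_iff fact_ge_self)
    moreover have "int n \<ge> int N + int p + \<bar>k\<bar>" using n unfolding N'_def by simp
    ultimately have ge: "int (fact n) + k \<ge> int N" by simp
    define q where "q = nat (int (fact n) + k)"
    have qN: "q \<ge> N" using ge unfolding q_def by simp
    have iq: "int q = int (fact n) + k" using ge unfolding q_def by simp
    have "p dvd fact n" using p n unfolding N'_def by (intro dvd_fact) auto
    then have "int p dvd int (fact n)" by (simp only: of_nat_dvd_iff)
    then have "int q mod int p = k mod int p" unfolding iq by (simp add: mod_add_left_eq[symmetric])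
    then have "int (q mod p) = int (j mod p)" using jk by (simp add: zmod_int)
    then have "q mod p = j mod p" by simp
    then show ?thesis unfolding q_def[symmetric] by (rule periodic_cong[OF per qN j])
  qed
  show ?thesis unfolding bangp_def
  proof (rule the_equality)
    show "\<exists>N. \<forall>n\<ge>N. ?s (nat (int (fact n) + k)) = ?s j" using ev by blast
    fix y assume "\<exists>N. \<forall>n\<ge>N. ?s (nat (int (fact n) + k)) = y"
    then obtain N'' where "\<forall>n\<ge>N''. ?s (nat (int (fact n) + k)) = y" by blast
    then have "?s (nat (int (fact (max N' N'')) + k)) = y" by simp
    moreover have "?s (nat (int (fact (max N' N'')) + k)) = ?s j" by (rule ev) simp
    ultimately show "y = ?s j" by simp
  qed
qed

context OM
begin

abbreviation P where "P a n \<equiv> spow (pmul pi) {om_one pi} a n"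

lemma pmul_sub: "X \<subseteq> C \<Longrightarrow> Y \<subseteq> C \<Longrightarrow> pmul pi X Y \<subseteq> C"
  unfolding pmul_def using mult_C by blast

lemma pmul_mono: "X \<subseteq> X' \<Longrightarrow> Y \<subseteq> Y' \<Longrightarrow> pmul pi X Y \<subseteq> pmul pi X' Y'"
  unfolding pmul_def by blast

lemma pmulI: "x \<in> X \<Longrightarrow> y \<in> Y \<Longrightarrow> om_mult pi x y \<in> pmul pi X Y"
  unfolding pmul_def by blast

lemma pmulE: "z \<in> pmul pi X Y \<Longrightarrow> (\<And>x y. z = om_mult pi x y \<Longrightarrow> x \<in> X \<Longrightarrow> y \<in> Y \<Longrightarrow> Q) \<Longrightarrow> Q"
  unfolding pmul_def by blast

lemma pmul_assoc: assumes "X \<subseteq> C" "Y \<subseteq> C" "Z \<subseteq> C"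
  shows "pmul pi (pmul pi X Y) Z = pmul pi X (pmul pi Y Z)"
proof
  show "pmul pi (pmul pi X Y) Z \<subseteq> pmul pi X (pmul pi Y Z)"
  proof
    fix w assume "w \<in> pmul pi (pmul pi X Y) Z"
    then obtain a z where w: "w = om_mult pi a z" and a: "a \<in> pmul pi X Y" and z: "z \<in> Z" by (rule pmulE)
    from a obtain x y where a': "a = om_mult pi x y" and x: "x \<in> X" and y: "y \<in> Y" by (rule pmulE)
    have "w = om_mult pi x (om_mult pi y z)" unfolding w a'
      using x y z assms by (intro mult_assoc) auto
    then show "w \<in> pmul pi X (pmul pi Y Z)" using pmulI[OF x pmulI[OF y z]] by simp
  qed
  show "pmul pi X (pmul pi Y Z) \<subseteq> pmul pi (pmul pi X Y) Z"
  proof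
    fix w assume "w \<in> pmul pi X (pmul pi Y Z)"
    then obtain x a where w: "w = om_mult pi x a" and a: "a \<in> pmul pi Y Z" and x: "x \<in> X" by (rule pmulE)
    from a obtain y z where a': "a = om_mult pi y z" and y: "y \<in> Y" and z: "z \<in> Z" by (rule pmulE)
    have "w = om_mult pi (om_mult pi x y) z" unfolding w a'
      using x y z assms by (intro mult_assoc[symmetric]) auto
    then show "w \<in> pmul pi (pmul pi X Y) Z" using pmulI[OF pmulI[OF x y] z] by simp
  qed
qed

lemma pmul_one_left: "X \<subseteq> C \<Longrightarrow> pmul pi {om_one pi} X = X"
  unfolding pmul_def using left_unit by force

lemma pmul_one_right: "X \<subseteq> C \<Longrightarrow> pmul pi X {om_one pi} = X"
  unfolding pmul_def using right_unit by force

lemma P_sub: "a \<subseteq> C \<Longrightarrow> P a n \<subseteq> C"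
  by (induction n) (auto simp: one_C pmul_sub)

lemma P_mono: assumes ab: "a \<subseteq> b" shows "P a n \<subseteq> P b n"
proof (induction n)
  case 0 then show ?case by simp
next
  case (Suc n) then show ?case using pmul_mono[OF Suc.IH ab] by simp
qed

lemma P_add: "a \<subseteq> C \<Longrightarrow> P a (i + j) = pmul pi (P a i) (P a j)"
proof (induction j)
  case 0 then show ?case using pmul_one_right[OF P_sub] by simp
next
  case (Suc j)
  have "P a (i + Suc j) = pmul pi (P a (i + j)) a" by simp
  also have "\<dots> = pmul pi (pmul pi (P a i) (P a j)) a" using Suc by simp
  also have "\<dots> = pmul pi (P a i) (pmul pi (P a j) a)" using Suc.prems P_sub by (intro pmul_assoc) auto
  finally show ?case by simp
qed

lemma P_one: "a \<subseteq> C \<Longrightarrow> P a 1 = a"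
  using pmul_one_left by simp

lemma P_swap1: assumes a: "a \<subseteq> C" and b: "b \<subseteq> C"
  shows "pmul pi (P (pmul pi a b) j) a = pmul pi a (P (pmul pi b a) j)"
proof (induction j)
  case 0 then show ?case using pmul_one_left[OF a] pmul_one_right[OF a] by simp
next
  case (Suc j)
  have ab: "pmul pi a b \<subseteq> C" and ba: "pmul pi b a \<subseteq> C" using pmul_sub[OF a b] pmul_sub[OF b a] by auto
  have "pmul pi (P (pmul pi a b) (Suc j)) a = pmul pi (pmul pi (P (pmul pi a b) j) (pmul pi a b)) a" by simp
  also have "\<dots> = pmul pi (P (pmul pi a b) j) (pmul pi (pmul pi a b) a)"
    using P_sub[OF ab] ab a by (intro pmul_assoc) auto
  also have "pmul pi (pmul pi a b) a = pmul pi a (pmul pi b a)" using a b by (intro pmul_assoc) auto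
  also have "pmul pi (P (pmul pi a b) j) (pmul pi a (pmul pi b a)) = pmul pi (pmul pi (P (pmul pi a b) j) a) (pmul pi b a)"
    using P_sub[OF ab] ba a by (intro pmul_assoc[symmetric]) auto
  also have "\<dots> = pmul pi (pmul pi a (P (pmul pi b a) j)) (pmul pi b a)" using Suc by simp
  also have "\<dots> = pmul pi a (pmul pi (P (pmul pi b a) j) (pmul pi b a))"
    using P_sub[OF ba] ba a by (intro pmul_assoc) auto
  finally show ?case by simp
qed

lemma P_swap: assumes a: "a \<subseteq> C" and b: "b \<subseteq> C"
  shows "P (pmul pi a b) (Suc j) = pmul pi a (pmul pi (P (pmul pi b a) j) b)"
proof -
  have ab: "pmul pi a b \<subseteq> C" and ba: "pmul pi b a \<subseteq> C" using pmul_sub[OF a b] pmul_sub[OF b a] by auto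
  have "P (pmul pi a b) (Suc j) = pmul pi (P (pmul pi a b) j) (pmul pi a b)" by simp
  also have "\<dots> = pmul pi (pmul pi (P (pmul pi a b) j) a) b"
    using P_sub[OF ab] a b by (intro pmul_assoc[symmetric]) auto
  also have "\<dots> = pmul pi (pmul pi a (P (pmul pi b a) j)) b" using P_swap1[OF a b] by simp
  also have "\<dots> = pmul pi a (pmul pi (P (pmul pi b a) j) b)"
    using P_sub[OF ba] a b by (intro pmul_assoc) auto
  finally show ?thesis .
qed

lemma P_periodic: assumes fin: "finite C" and a: "a \<subseteq> C"
  shows "\<exists>N p. p > 0 \<and> (\<forall>n\<ge>N. P a (n + p) = P a n)"
proof (rule eventually_periodic)
  show "finite (range (P a))"
    by (rule finite_subset[of _ "Pow C"]) (use P_sub[OF a] fin in auto)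
  show "\<And>n. P a (Suc n) = (\<lambda>X. pmul pi X a) (P a n)" by simp
qed

lemma sharp_facts: assumes fin: "finite C" and a: "a \<subseteq> C"
  shows "\<exists>N. (\<forall>j\<ge>N. P a j \<subseteq> psharp pi a) \<and> (\<forall>z\<in>psharp pi a. \<forall>L. \<exists>j\<ge>L. z \<in> P a j)
     \<and> (\<forall>k. bangp (pmul pi) {om_one pi} a k \<subseteq> psharp pi a)
     \<and> (\<exists>j\<ge>N. bangp (pmul pi) {om_one pi} a 0 = P a j \<and> P a (j + j) = P a j)"
proof -
  obtain N p where p: "p > 0" and per: "\<forall>n\<ge>N. P a (n + p) = P a n"
    using P_periodic[OF fin a] by blast
  have bc: "bangp (pmul pi) {om_one pi} a k = P a j" if "j \<ge> N" "int j mod int p = k mod int p" for j k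
    by (rule bangp_char[OF p per that])
  have K1: "P a j \<subseteq> psharp pi a" if "j \<ge> N" for j
  proof -
    have "bangp (pmul pi) {om_one pi} a (int j) = P a j" using bc[OF that] by simp
    then show ?thesis unfolding psharp_def by blast
  qed
  have K2: "\<exists>j\<ge>L. z \<in> P a j" if zs: "z \<in> psharp pi a" for z L
  proof -
    obtain k :: nat where z: "z \<in> bangp (pmul pi) {om_one pi} a (int k)" using zs unfolding psharp_def by blast
    define j where "j = k + p * (L + N)"
    have jL: "j \<ge> L + N" unfolding j_def using p by (simp add: trans_le_add2)
    have "int j mod int p = int k mod int p" unfolding j_def by simp
    then have "bangp (pmul pi) {om_one pi} a (int k) = P a j" using jL by (intro bc) auto
    then show ?thesis using z jL by (intro exI[of _ j]) auto
  qed
  have K3: "bangp (pmul pi) {om_one pi} a k \<subseteq> psharp pi a" for k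
  proof -
    define j where "j = N * p + nat (k mod int p)"
    have Np: "N \<le> N * p" using p by (cases p) auto
    have jN: "j \<ge> N" unfolding j_def using Np by (rule trans_le_add1)
    have "int j = int N * int p + k mod int p" unfolding j_def using p by simp
    then have "int j mod int p = k mod int p" by simp
    then have "bangp (pmul pi) {om_one pi} a k = P a j" using jN by (intro bc) auto
    then show ?thesis using K1[OF jN] by simp
  qed
  have Np: "N \<le> N * p" using p by (cases p) auto
  have K4: "\<exists>j\<ge>N. bangp (pmul pi) {om_one pi} a 0 = P a j \<and> P a (j + j) = P a j"
  proof (intro exI conjI)
    show "N * p \<ge> N" by (rule Np)
    show "bangp (pmul pi) {om_one pi} a 0 = P a (N * p)" using Np by (intro bc) auto
    show "P a (N * p + N * p) = P a (N * p)"
    proof (rule periodic_cong[OF per])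
      show "N \<le> N * p + N * p" using Np by (rule trans_le_add1)
    qed (use Np in auto)
  qed
  show ?thesis using K1 K2 K3 K4 by blast
qed

lemma sharp_sub: "finite C \<Longrightarrow> a \<subseteq> C \<Longrightarrow> psharp pi a \<subseteq> C"
  using sharp_facts[of a] P_sub[of a] by blast

lemma sharp_mono: assumes fin: "finite C" and b: "b \<subseteq> C" and ab: "a \<subseteq> b"
  shows "psharp pi a \<subseteq> psharp pi b"
proof
  have a: "a \<subseteq> C" using ab b by simp
  obtain Nb where Kb: "\<forall>j\<ge>Nb. P b j \<subseteq> psharp pi b" using sharp_facts[OF fin b] by blast
  fix z assume "z \<in> psharp pi a"
  then obtain j where "j \<ge> Nb" "z \<in> P a j" using sharp_facts[OF fin a] by blast
  then show "z \<in> psharp pi b" using Kb P_mono[OF ab, of j] by blast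
qed

lemma sharp_idem: assumes fin: "finite C" and e: "e \<subseteq> C" and ee: "pmul pi e e = e"
  shows "psharp pi e = e"
proof -
  have Pe: "P e (Suc n) = e" for n
  proof (induction n)
    case 0 then show ?case using P_one[OF e] by simp
  next
    case (Suc n) then show ?case using ee by simp
  qed
  obtain N where K1: "\<forall>j\<ge>N. P e j \<subseteq> psharp pi e" and K2: "\<forall>z\<in>psharp pi e. \<forall>L. \<exists>j\<ge>L. z \<in> P e j"
    using sharp_facts[OF fin e] by blast
  show ?thesis
  proof
    show "e \<subseteq> psharp pi e" using K1 Pe[of N] by (metis le_SucI order_refl)
    show "psharp pi e \<subseteq> e"
    proof
      fix z assume "z \<in> psharp pi e"
      then obtain j where "j \<ge> 1" "z \<in> P e j" using K2 by blast
      then show "z \<in> e" using Pe[of "j - 1"] by simp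
    qed
  qed
qed

lemma sharp_sq: assumes fin: "finite C" and a: "a \<subseteq> C"
  shows "pmul pi (psharp pi a) (psharp pi a) = psharp pi a"
proof -
  obtain N where K1: "\<forall>j\<ge>N. P a j \<subseteq> psharp pi a" and K2: "\<forall>z\<in>psharp pi a. \<forall>L. \<exists>j\<ge>L. z \<in> P a j"
    using sharp_facts[OF fin a] by blast
  show ?thesis
  proof
    show "pmul pi (psharp pi a) (psharp pi a) \<subseteq> psharp pi a"
    proof
      fix w assume "w \<in> pmul pi (psharp pi a) (psharp pi a)"
      then obtain x y where w: "w = om_mult pi x y" and x: "x \<in> psharp pi a" and y: "y \<in> psharp pi a"
        by (rule pmulE)
      obtain i where i: "i \<ge> N" "x \<in> P a i" using K2 x by blast
      obtain j where j: "j \<ge> 0" "y \<in> P a j" using K2 y by blast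
      have "w \<in> P a (i + j)" unfolding P_add[OF a] w by (rule pmulI[OF i(2) j(2)])
      then show "w \<in> psharp pi a" using K1 i(1) by (meson le_add1 le_trans subsetD)
    qed
    show "psharp pi a \<subseteq> pmul pi (psharp pi a) (psharp pi a)"
    proof
      fix z assume "z \<in> psharp pi a"
      then obtain l where l: "l \<ge> N + N" "z \<in> P a l" using K2 by blast
      have "l = N + (l - N)" using l(1) by simp
      then have "P a l = pmul pi (P a N) (P a (l - N))" using P_add[OF a, of N "l - N"] by simp
      moreover have "P a N \<subseteq> psharp pi a" "P a (l - N) \<subseteq> psharp pi a" using K1 l(1) by auto
      ultimately show "z \<in> pmul pi (psharp pi a) (psharp pi a)" using l(2) pmul_mono by blast
    qed
  qed
qed

lemma sharp_swap: assumes fin: "finite C" and a: "a \<subseteq> C" and b: "b \<subseteq> C"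
  shows "psharp pi (pmul pi a b) = pmul pi a (pmul pi (psharp pi (pmul pi b a)) b)"
proof -
  have ab: "pmul pi a b \<subseteq> C" and ba: "pmul pi b a \<subseteq> C" using pmul_sub[OF a b] pmul_sub[OF b a] by auto
  obtain N1 where A1: "\<forall>j\<ge>N1. P (pmul pi a b) j \<subseteq> psharp pi (pmul pi a b)"
    and A2: "\<forall>z\<in>psharp pi (pmul pi a b). \<forall>L. \<exists>j\<ge>L. z \<in> P (pmul pi a b) j"
    using sharp_facts[OF fin ab] by blast
  obtain N2 where B1: "\<forall>j\<ge>N2. P (pmul pi b a) j \<subseteq> psharp pi (pmul pi b a)"
    and B2: "\<forall>z\<in>psharp pi (pmul pi b a). \<forall>L. \<exists>j\<ge>L. z \<in> P (pmul pi b a) j"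
    using sharp_facts[OF fin ba] by blast
  show ?thesis
  proof
    show "psharp pi (pmul pi a b) \<subseteq> pmul pi a (pmul pi (psharp pi (pmul pi b a)) b)"
    proof
      fix z assume "z \<in> psharp pi (pmul pi a b)"
      then obtain j where j: "j \<ge> Suc N2" "z \<in> P (pmul pi a b) j" using A2 by blast
      then obtain j' where j': "j = Suc j'" "j' \<ge> N2" by (cases j) auto
      have "z \<in> pmul pi a (pmul pi (P (pmul pi b a) j') b)" using j(2) unfolding j'(1) P_swap[OF a b] .
      moreover have "P (pmul pi b a) j' \<subseteq> psharp pi (pmul pi b a)" using B1 j'(2) by blast
      ultimately show "z \<in> pmul pi a (pmul pi (psharp pi (pmul pi b a)) b)"
        using pmul_mono[OF order_refl pmul_mono[OF _ order_refl]] by blast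
    qed
    show "pmul pi a (pmul pi (psharp pi (pmul pi b a)) b) \<subseteq> psharp pi (pmul pi a b)"
    proof
      fix z assume "z \<in> pmul pi a (pmul pi (psharp pi (pmul pi b a)) b)"
      then obtain x w where z: "z = om_mult pi x w" and x: "x \<in> a" and w: "w \<in> pmul pi (psharp pi (pmul pi b a)) b"
        by (rule pmulE)
      from w obtain u y where w': "w = om_mult pi u y" and u: "u \<in> psharp pi (pmul pi b a)" and y: "y \<in> b"
        by (rule pmulE)
      obtain i where i: "i \<ge> N1" "u \<in> P (pmul pi b a) i" using B2 u by blast
      have "z \<in> pmul pi a (pmul pi (P (pmul pi b a) i) b)" unfolding z w' by (intro pmulI x y i(2))
      then have "z \<in> P (pmul pi a b) (Suc i)" unfolding P_swap[OF a b] .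
      then show "z \<in> psharp pi (pmul pi a b)" using A1 i(1) by (meson le_SucI subsetD)
    qed
  qed
qed

end


lemma om_word_mono: "om_word D r F \<Longrightarrow> D \<subseteq> E \<Longrightarrow> om_word E r F"
  unfolding om_word_def by blast

context OM
begin

lemma spow_fp: assumes X: "X \<subseteq> C" shows "P X n = {fp pi w 0 n | w. \<forall>i<n. w i \<in> X}"
proof (induction n)
  case 0 then show ?case by simp
next
  case (Suc n)
  show ?case
  proof
    show "P X (Suc n) \<subseteq> {fp pi w 0 (Suc n) | w. \<forall>i<Suc n. w i \<in> X}"
    proof
      fix z assume "z \<in> P X (Suc n)"
      then have "z \<in> pmul pi (P X n) X" by simp
      then obtain u x where z: "z = om_mult pi u x" and u: "u \<in> P X n" and x: "x \<in> X" by (rule pmulE)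
      from u obtain w where u': "u = fp pi w 0 n" and w: "\<forall>i<n. w i \<in> X" using Suc by blast
      define w' where "w' = w(n := x)"
      have "fp pi w' 0 n = fp pi w 0 n" by (rule fp_cong) (simp add: w'_def)
      then have "z = fp pi w' 0 (Suc n)" using z u' by (simp add: w'_def)
      moreover have "\<forall>i<Suc n. w' i \<in> X" using w x by (simp add: w'_def less_Suc_eq)
      ultimately show "z \<in> {fp pi w 0 (Suc n) | w. \<forall>i<Suc n. w i \<in> X}" by blast
    qed
    show "{fp pi w 0 (Suc n) | w. \<forall>i<Suc n. w i \<in> X} \<subseteq> P X (Suc n)"
    proof
      fix z assume "z \<in> {fp pi w 0 (Suc n) | w. \<forall>i<Suc n. w i \<in> X}"
      then obtain w where z: "z = fp pi w 0 (Suc n)" and w: "\<forall>i<Suc n. w i \<in> X" by blast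
      have "fp pi w 0 n \<in> P X n" using Suc w by auto
      then have "om_mult pi (fp pi w 0 n) (w n) \<in> pmul pi (P X n) X" using w by (intro pmulI) auto
      then show "z \<in> P X (Suc n)" using z by simp
    qed
  qed
qed

lemma PI_omega: assumes fin: "finite C" and X: "X \<subseteq> C"
  shows "om_omega (PI pi) X = pomega pi X"
proof
  show "om_omega (PI pi) X \<subseteq> pomega pi X"
  proof
    fix x assume "x \<in> om_omega (PI pi) X"
    then obtain f where x: "x = pi womega f" and f: "\<forall>i. f i \<in> X"
      unfolding om_omega_def PI_def by auto
    have fC: "\<And>i. f i \<in> C" using f X by blast
    obtain n m where nm0: "n \<ge> 1 \<and> m \<ge> 1 \<and> pi womega f = om_mult pi (fp pi f 0 n) (om_omega pi (fp pi f n m))"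
      using ramsey_om[OF fin fC] by iprover
    have nm: "n \<ge> 1" "m \<ge> 1" using nm0 by simp_all
    have eq: "pi womega f = om_mult pi (fp pi f 0 n) (om_omega pi (fp pi f n m))" using nm0 by simp
    have u: "fp pi f 0 n \<in> pplus pi X"
      unfolding pplus_def spow_fp[OF X] using nm f by blast
    have "fp pi f n m = fp pi (\<lambda>i. f (n + i)) 0 m" by (rule fp_cong) simp
    then have v: "fp pi f n m \<in> pplus pi X"
      unfolding pplus_def spow_fp[OF X] using nm f by auto
    show "x \<in> pomega pi X" unfolding pomega_def x eq using u v by blast
  qed
  show "pomega pi X \<subseteq> om_omega (PI pi) X"
  proof
    fix x assume "x \<in> pomega pi X"
    then obtain u v where x: "x = om_mult pi u (om_omega pi v)" and u: "u \<in> pplus pi X" and v: "v \<in> pplus pi X"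
      unfolding pomega_def by blast
    obtain n w where n: "n \<ge> 1" and u': "u = fp pi w 0 n" and w: "\<forall>i<n. w i \<in> X"
      using u unfolding pplus_def spow_fp[OF X] by blast
    obtain m w' where m: "m \<ge> 1" and v': "v = fp pi w' 0 m" and w': "\<forall>i<m. w' i \<in> X"
      using v unfolding pplus_def spow_fp[OF X] by blast
    define f where "f i = (if i < n then w i else w' ((i - n) mod m))" for i
    have fX: "f i \<in> X" for i
      using w w' m unfolding f_def by auto
    have fC: "\<And>i. f i \<in> C" using fX X by blast
    define h where "h a = (if a = 0 then 0 else n + (a - 1) * m)" for a
    have hm: "strict_mono h"
    proof (rule strict_monoI)
      fix a b :: nat assume ab: "a < b"
      show "h a < h b"
      proof (cases "a = 0")
        case True then show ?thesis using ab n by (simp add: h_def)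
      next
        case False
        then have "(a - 1) * m < (b - 1) * m" using ab m by simp
        then show ?thesis using False ab by (simp add: h_def)
      qed
    qed
    have h0: "h 0 = 0" by (simp add: h_def)
    have blk: "fp pi f (h a) (h (Suc a) - h a) = (if a = 0 then u else v)" for a
    proof (cases "a = 0")
      case True
      have "fp pi f 0 n = fp pi w 0 n" by (rule fp_cong) (simp add: f_def)
      then show ?thesis using True by (simp add: h_def u')
    next
      case False
      then obtain b where a: "a = Suc b" by (cases a) auto
      have hs: "h (Suc a) - h a = m" "h a = n + b * m" using a by (simp_all add: h_def algebra_simps)
      have "fp pi f (n + b * m) m = fp pi w' 0 m"
      proof (rule fp_cong)
        fix i assume i: "i < m"
        have "(n + b * m + i - n) mod m = i" using i by simp
        then show "f (n + b * m + i) = w' (0 + i)" by (simp add: f_def)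
      qed
      then show ?thesis using False hs by (simp add: v')
    qed
    have "pi womega f = pi womega (\<lambda>a. fp pi f (h a) (h (Suc a) - h a))"
      by (rule block[OF fC hm h0])
    also have "\<dots> = pi womega (\<lambda>a. if a = 0 then u else v)" unfolding blk ..
    also have "\<dots> = om_mult pi u (om_omega pi v)"
    proof (rule uvv)
      show "u \<in> C" using u P_sub[OF X] unfolding pplus_def by auto
      show "v \<in> C" using v P_sub[OF X] unfolding pplus_def by auto
    qed
    finally have "x = pi womega f" using x by simp
    then show "x \<in> om_omega (PI pi) X" unfolding om_omega_def PI_def using fX by auto
  qed
qed

lemma pres_Pow: assumes fin: "finite C"
  shows "ordered_fin_om_presentation (Pow C) {om_one pi} (\<subseteq>) (pmul pi) (pomega pi)"
  unfolding ordered_fin_om_presentation_def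
proof (intro conjI exI[of _ "PI pi"] allI ballI)
  show "finite (Pow C)" using fin by simp
  show "ordinal_monoid (Pow C) (PI pi)" by (rule PI_om)
  show "ordered_om (Pow C) (\<subseteq>) (PI pi)" by (rule PI_ordered)
  show "\<And>f. PI pi {} f = {om_one pi}" by (rule PI_empty)
  show "\<And>x y. x \<in> Pow C \<Longrightarrow> y \<in> Pow C \<Longrightarrow> pmul pi x y = om_mult (PI pi) x y"
    using PI_mult by simp
  show "\<And>x. x \<in> Pow C \<Longrightarrow> pomega pi x = om_omega (PI pi) x"
    using PI_omega[OF fin] by simp
qed

lemma pomega_sub: assumes fin: "finite C" and X: "X \<subseteq> C" shows "pomega pi X \<subseteq> C"
proof -
  interpret Q: OM "Pow C" "PI pi" by (rule OM.intro[OF PI_om])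
  have "om_omega (PI pi) X \<in> Pow C" using X by (intro Q.omega_C) simp
  then show ?thesis using PI_omega[OF fin X] by simp
qed

lemma Sat_sub: assumes fin: "finite C" and h: "range h \<subseteq> C" shows "Sat pi h \<subseteq> Pow C"
proof
  fix X assume "X \<in> Sat pi h"
  then show "X \<in> Pow C"
  proof (induction rule: Sat.induct)
    case (letter a) then show ?case using h by auto
  next
    case unit then show ?case using one_C by simp
  next
    case (mul X Y) then show ?case using pmul_sub by simp
  next
    case (sharp X) then show ?case using sharp_sub[OF fin] by simp
  next
    case (omega X) then show ?case using pomega_sub[OF fin] by simp
  qed
qed

lemma Sat_closed: assumes fin: "finite C" and h: "range h \<subseteq> C" and w: "om_word (Sat pi h) r F"
  shows "PI pi r F \<in> Sat pi h"
proof -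
  interpret Q: OM "Pow C" "PI pi" by (rule OM.intro[OF PI_om])
  have SS: "Sat pi h \<subseteq> Pow C" by (rule Sat_sub[OF fin h])
  show ?thesis
  proof (rule Q.closure[OF _ SS _ _ _ w])
    show "finite (Pow C)" using fin by simp
    show "om_one (PI pi) \<in> Sat pi h" unfolding PI_one by (rule Sat.unit)
    fix x y assume x: "x \<in> Sat pi h" and y: "y \<in> Sat pi h"
    have "om_mult (PI pi) x y = pmul pi x y" using x y SS by (intro PI_mult) auto
    then show "om_mult (PI pi) x y \<in> Sat pi h" using Sat.mul[OF x y] by simp
  next
    fix x assume x: "x \<in> Sat pi h"
    have "om_omega (PI pi) x = pomega pi x" using x SS by (intro PI_omega[OF fin]) auto
    then show "om_omega (PI pi) x \<in> Sat pi h" using Sat.omega[OF x] by simp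
  qed
qed

lemma pres_Sat: assumes fin: "finite C" and h: "range h \<subseteq> C"
  shows "ordered_fin_om_presentation (Sat pi h) {om_one pi} (\<subseteq>) (pmul pi) (pomega pi)"
  unfolding ordered_fin_om_presentation_def
proof (intro conjI exI[of _ "PI pi"] allI ballI)
  have SS: "Sat pi h \<subseteq> Pow C" by (rule Sat_sub[OF fin h])
  show "finite (Sat pi h)" by (rule finite_subset[OF SS]) (use fin in simp)
  show "ordinal_monoid (Sat pi h) (PI pi)"
    unfolding ordinal_monoid_def
  proof (intro conjI allI impI)
    show "\<And>r f. om_word (Sat pi h) r f \<Longrightarrow> PI pi r f \<in> Sat pi h" by (rule Sat_closed[OF fin h])
    show "\<And>r f f'. om_word (Sat pi h) r f \<Longrightarrow> \<forall>i\<in>Field r. f i = f' i \<Longrightarrow> PI pi r f = PI pi r f'"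
      by (rule PI_cong) blast
    show "\<And>i f. f i \<in> Sat pi h \<Longrightarrow> PI pi {(i, i)} f = f i" using SS by (intro PI_single) blast
    fix r s :: "nat rel" and f and g :: "nat \<Rightarrow> nat" assume w: "om_word (Sat pi h) r f" and "Well_order s" "g ` Field r \<subseteq> Field s"
      "\<forall>i j. (i, j) \<in> r \<longrightarrow> (g i, g j) \<in> s"
    then show "PI pi s (\<lambda>j. PI pi (Restr r {i \<in> Field r. g i = j}) f) = PI pi r f"
      using om_word_mono[OF w SS] by (intro PI_assoc) blast+
  qed
  show "ordered_om (Sat pi h) (\<subseteq>) (PI pi)"
    unfolding ordered_om_def
  proof (intro conjI ballI allI impI)
    fix r :: "nat rel" and f f' :: "nat \<Rightarrow> 'a set" assume "\<forall>i\<in>Field r. f i \<subseteq> f' i"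
    then show "PI pi r f \<subseteq> PI pi r f'" unfolding PI_def by blast
  qed auto
  show "\<And>f. PI pi {} f = {om_one pi}" by (rule PI_empty)
  show "\<And>x y. x \<in> Sat pi h \<Longrightarrow> y \<in> Sat pi h \<Longrightarrow> pmul pi x y = om_mult (PI pi) x y"
    using PI_mult SS by blast
  show "\<And>x. x \<in> Sat pi h \<Longrightarrow> pomega pi x = om_omega (PI pi) x"
    using PI_omega[OF fin] SS by blast
qed

lemma merge_generic: assumes fin: "finite C" and DS: "D \<subseteq> Pow C" and sh: "\<And>a. a \<in> D \<Longrightarrow> psharp pi a \<in> D"
  and pres: "ordered_fin_om_presentation D {om_one pi} (\<subseteq>) (pmul pi) (pomega pi)"
  shows "ordinal_monoid_merge D {om_one pi} (\<subseteq>) (pmul pi) (pomega pi) (psharp pi)"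
  unfolding ordinal_monoid_merge_def
proof (intro conjI ballI allI impI)
  show "ordered_fin_om_presentation D {om_one pi} (\<subseteq>) (pmul pi) (pomega pi)" by (rule pres)
  fix a assume aD: "a \<in> D"
  have a: "a \<subseteq> C" using aD DS by blast
  show "psharp pi a \<in> D" by (rule sh[OF aD])
  show "\<And>k. bangp (pmul pi) {om_one pi} a k \<subseteq> psharp pi a" using sharp_facts[OF fin a] by blast
  show "psharp pi (bangp (pmul pi) {om_one pi} a 0) = bangp (pmul pi) {om_one pi} a 0"
  proof -
    obtain j where j: "bangp (pmul pi) {om_one pi} a 0 = P a j" "P a (j + j) = P a j"
      using sharp_facts[OF fin a] by blast
    have "pmul pi (P a j) (P a j) = P a j" using j(2) P_add[OF a, of j j] by simp
    then show ?thesis unfolding j(1) by (rule sharp_idem[OF fin P_sub[OF a]])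
  qed
  show sq: "pmul pi (psharp pi a) (psharp pi a) = psharp pi a" by (rule sharp_sq[OF fin a])
  show "psharp pi (psharp pi a) = psharp pi a" by (rule sharp_idem[OF fin sharp_sub[OF fin a] sq])
  fix b assume bD: "b \<in> D"
  have b: "b \<subseteq> C" using bD DS by blast
  show "a \<subseteq> b \<Longrightarrow> psharp pi a \<subseteq> psharp pi b" by (rule sharp_mono[OF fin b])
  show "psharp pi (pmul pi a b) = pmul pi a (pmul pi (psharp pi (pmul pi b a)) b)"
    by (rule sharp_swap[OF fin a b])
qed

end

theorem lemma5p1:
  fixes M :: "'a set" and pi :: "nat rel \<Rightarrow> (nat \<Rightarrow> 'a) \<Rightarrow> 'a" and h :: "'b \<Rightarrow> 'a"
  assumes "finite M" and "ordinal_monoid M pi" and "range h \<subseteq> M"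
  shows "ordinal_monoid_merge (Pow M) {om_one pi} (\<subseteq>) (pmul pi) (pomega pi) (psharp pi)
       \<and> ordinal_monoid_merge (Sat pi h) {om_one pi} (\<subseteq>) (pmul pi) (pomega pi) (psharp pi)"
proof -
  interpret OM M pi by (rule OM.intro[OF assms(2)])
  have fin: "finite M" by (rule assms(1))
  show ?thesis
  proof
    show "ordinal_monoid_merge (Pow M) {om_one pi} (\<subseteq>) (pmul pi) (pomega pi) (psharp pi)"
    proof (rule merge_generic[OF fin order_refl _ pres_Pow[OF fin]])
      fix a assume "a \<in> Pow M" then show "psharp pi a \<in> Pow M" using sharp_sub[OF fin] by simp
    qed
    show "ordinal_monoid_merge (Sat pi h) {om_one pi} (\<subseteq>) (pmul pi) (pomega pi) (psharp pi)"
    proof (rule merge_generic[OF fin Sat_sub[OF fin assms(3)] _ pres_Sat[OF fin assms(3)]])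
      fix a assume "a \<in> Sat pi h" then show "psharp pi a \<in> Sat pi h" by (rule Sat.sharp)
    qed
  qed
qed


end
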